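(* Let $\mathcal{D}_n=(Q,\Sigma,\delta,0,F)$ with $Q=\{0,\dots,n-1\}$ be a minimal complete DFA accepting a suffix-free language $L$, with empty state $n-1$, and let $T$ be its transition semigroup. Then every semiconstant transformation $(S\to q)$ belonging to $T$ satisfies $0\in S$ and $q=n-1$. Moreover, if $T$ is maximal (i.e. no minimal complete DFA with state set $Q$, initial state $0$ and empty state $n-1$ accepting a suffix-free language has a transition semigroup properly containing $T$), then every semiconstant transformation $(S\to n-1)$ with $0\in S$ belongs to $T$.
   Context: A language $L$ is suffix-free if whenever $w\in L$ and $u\in L$ with $u$ a suffix of $w$, then $u=w$. Transformations act on the right. The transition semigroup of a DFA is the semigroup of transformations of its state set generated by the transformations induced by its letters. A minimal complete DFA of a suffix-free language with $n\ge2$ states has exactly one empty state (a state from which no final state is reachable), labeled $n-1$. A transformation $t$ of $Q$ is semiconstant, written $(S\to q)$, if for some nonempty $S\subseteq Q$ and $q\in Q$ it maps every state of $S$ to $q$ and fixes every state of $Q\setminus S$. *)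

theory Defs
  imports Main "HOL-Library.Sublist"
begin

text \<open>A DFA with state set Q = {0..<n}, alphabet Sigma, transition function
  delta (delta a q is the state reached from q by letter a), initial state 0,
  final states F.\<close>

fun delta_hat :: "('a \<Rightarrow> nat \<Rightarrow> nat) \<Rightarrow> nat \<Rightarrow> 'a list \<Rightarrow> nat" where
  "delta_hat \<delta> q [] = q"
| "delta_hat \<delta> q (a # w) = delta_hat \<delta> (\<delta> a q) w"

definition complete_dfa :: "nat \<Rightarrow> 'a set \<Rightarrow> ('a \<Rightarrow> nat \<Rightarrow> nat) \<Rightarrow> nat set \<Rightarrow> bool" where
  "complete_dfa n \<Sigma> \<delta> F \<longleftrightarrow> finite \<Sigma> \<and> 0 < n \<and> F \<subseteq> {..<n} \<and>
     (\<forall>a\<in>\<Sigma>. \<forall>q<n. \<delta> a q < n)"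

definition dfa_lang :: "'a set \<Rightarrow> ('a \<Rightarrow> nat \<Rightarrow> nat) \<Rightarrow> nat set \<Rightarrow> 'a list set" where
  "dfa_lang \<Sigma> \<delta> F = {w. w \<in> lists \<Sigma> \<and> delta_hat \<delta> 0 w \<in> F}"

definition minimal_dfa :: "nat \<Rightarrow> 'a set \<Rightarrow> ('a \<Rightarrow> nat \<Rightarrow> nat) \<Rightarrow> nat set \<Rightarrow> bool" where
  "minimal_dfa n \<Sigma> \<delta> F \<longleftrightarrow>
     (\<forall>q<n. \<exists>w\<in>lists \<Sigma>. delta_hat \<delta> 0 w = q) \<and>
     (\<forall>p<n. \<forall>q<n. p \<noteq> q \<longrightarrow>
        (\<exists>w\<in>lists \<Sigma>. (delta_hat \<delta> p w \<in> F) \<noteq> (delta_hat \<delta> q w \<in> F)))"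

definition empty_state :: "nat \<Rightarrow> 'a set \<Rightarrow> ('a \<Rightarrow> nat \<Rightarrow> nat) \<Rightarrow> nat set \<Rightarrow> nat \<Rightarrow> bool" where
  "empty_state n \<Sigma> \<delta> F q \<longleftrightarrow> q < n \<and> (\<forall>w\<in>lists \<Sigma>. delta_hat \<delta> q w \<notin> F)"

definition suffix_free :: "'a list set \<Rightarrow> bool" where
  "suffix_free L \<longleftrightarrow> (\<forall>w\<in>L. \<forall>u\<in>L. suffix u w \<longrightarrow> u = w)"

definition sf_dfa :: "nat \<Rightarrow> 'a set \<Rightarrow> ('a \<Rightarrow> nat \<Rightarrow> nat) \<Rightarrow> nat set \<Rightarrow> bool" where
  "sf_dfa n \<Sigma> \<delta> F \<longleftrightarrow> complete_dfa n \<Sigma> \<delta> F \<and> minimal_dfa n \<Sigma> \<delta> F \<and>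
     empty_state n \<Sigma> \<delta> F (n - 1) \<and> suffix_free (dfa_lang \<Sigma> \<delta> F)"

text \<open>Transformations of Q are represented extensionally as functions
  nat => nat that fix every number >= n. The transformation induced by a
  word w (acting on the right: letters applied left to right).\<close>
definition word_tr :: "nat \<Rightarrow> ('a \<Rightarrow> nat \<Rightarrow> nat) \<Rightarrow> 'a list \<Rightarrow> nat \<Rightarrow> nat" where
  "word_tr n \<delta> w = (\<lambda>q. if q < n then delta_hat \<delta> q w else q)"

text \<open>Transition semigroup: generated by the letter transformations, i.e. the
  transformations induced by the nonempty words.\<close>
definition trans_sg :: "nat \<Rightarrow> 'a set \<Rightarrow> ('a \<Rightarrow> nat \<Rightarrow> nat) \<Rightarrow> (nat \<Rightarrow> nat) set" where
  "trans_sg n \<Sigma> \<delta> = {word_tr n \<delta> w | w. w \<in> lists \<Sigma> \<and> w \<noteq> []}"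

definition semiconst :: "nat set \<Rightarrow> nat \<Rightarrow> nat \<Rightarrow> nat" where
  "semiconst S q = (\<lambda>p. if p \<in> S then q else p)"

text \<open>Maximality of the transition semigroup among all such DFAs with state set
  {0..<n}, initial state 0 and empty state n-1 (over any finite alphabet,
  encoded as a finite set of naturals).\<close>
definition maximal_sg :: "nat \<Rightarrow> (nat \<Rightarrow> nat) set \<Rightarrow> bool" where
  "maximal_sg n T \<longleftrightarrow>
     (\<forall>(\<Sigma>'::nat set) \<delta>' F'. sf_dfa n \<Sigma>' \<delta>' F' \<longrightarrow> \<not> (T \<subset> trans_sg n \<Sigma>' \<delta>'))"

end

theory Submission
  imports Defs
begin

lemma dh_append: "delta_hat d q (u @ w) = delta_hat d (delta_hat d q u) w"
  by (induction u arbitrary: q) auto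

lemma dh_closed: "complete_dfa n \<Sigma> d F \<Longrightarrow> q < n \<Longrightarrow> w \<in> lists \<Sigma> \<Longrightarrow> delta_hat d q w < n"
  by (induction w arbitrary: q) (auto simp: complete_dfa_def)

lemma nonempty_state:
  assumes "sf_dfa n \<Sigma> d F" "r < n" "r \<noteq> n - 1"
  shows "\<exists>v\<in>lists \<Sigma>. delta_hat d r v \<in> F"
proof -
  have n1: "n - 1 < n" "\<forall>w\<in>lists \<Sigma>. delta_hat d (n-1) w \<notin> F"
    using assms(1) by (auto simp: sf_dfa_def empty_state_def)
  obtain w where "w \<in> lists \<Sigma>" "(delta_hat d r w \<in> F) \<noteq> (delta_hat d (n-1) w \<in> F)"
    using assms n1 unfolding sf_dfa_def minimal_dfa_def by blast
  then show ?thesis using n1 by auto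
qed

lemma exists_final:
  assumes "n \<ge> 2" "sf_dfa n \<Sigma> d F"
  shows "\<exists>v\<in>lists \<Sigma>. delta_hat d 0 v \<in> F"
  using nonempty_state[OF assms(2)] assms(1) by auto

lemma reach:
  assumes "sf_dfa n \<Sigma> d F" "p < n"
  obtains u where "u \<in> lists \<Sigma>" "delta_hat d 0 u = p"
  using assms unfolding sf_dfa_def minimal_dfa_def by blast

lemma not_to_zero:
  assumes "n \<ge> 2" "sf_dfa n \<Sigma> d F" "p < n" "w \<in> lists \<Sigma>" "w \<noteq> []"
  shows "delta_hat d p w \<noteq> 0"
proof
  assume h: "delta_hat d p w = 0"
  obtain u where u: "u \<in> lists \<Sigma>" "delta_hat d 0 u = p" using reach assms by blast
  obtain v where v: "v \<in> lists \<Sigma>" "delta_hat d 0 v \<in> F" using exists_final assms by blast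
  have "delta_hat d 0 (u @ w @ v) \<in> F" using h u v by (simp add: dh_append)
  then have "u @ w @ v \<in> dfa_lang \<Sigma> d F" "v \<in> dfa_lang \<Sigma> d F"
    using u v assms(4) by (auto simp: dfa_lang_def)
  moreover have "suffix v (u @ w @ v)" by (simp add: suffix_def)
  ultimately have "v = u @ w @ v" using assms(2) unfolding sf_dfa_def suffix_free_def by blast
  then show False using assms(5) by (metis append_self_conv2 append.assoc append_Nil2 Nil_is_append_conv
        append_eq_append_conv)
qed

lemma collide:
  assumes "n \<ge> 2" "sf_dfa n \<Sigma> d F" "p < n" "p \<noteq> 0" "w \<in> lists \<Sigma>" "w \<noteq> []"
    and eq: "delta_hat d 0 w = delta_hat d p w"
  shows "delta_hat d p w = n - 1"
proof (rule ccontr)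
  assume ne: "delta_hat d p w \<noteq> n - 1"
  have cd: "complete_dfa n \<Sigma> d F" using assms(2) by (simp add: sf_dfa_def)
  have "delta_hat d p w < n" using dh_closed[OF cd assms(3,5)] .
  then obtain v where v: "v \<in> lists \<Sigma>" "delta_hat d (delta_hat d p w) v \<in> F"
    using nonempty_state[OF assms(2)] ne by blast
  obtain u where u: "u \<in> lists \<Sigma>" "delta_hat d 0 u = p" using reach assms by blast
  have un: "u \<noteq> []" using u assms(4) by auto
  have "u @ w @ v \<in> dfa_lang \<Sigma> d F" "w @ v \<in> dfa_lang \<Sigma> d F"
    using u v assms(5) eq by (auto simp: dfa_lang_def dh_append)
  moreover have "suffix (w @ v) (u @ w @ v)" by (simp add: suffix_def)
  ultimately have "w @ v = u @ w @ v" using assms(2) unfolding sf_dfa_def suffix_free_def by blast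
  then show False using un by simp
qed

lemma part1:
  assumes "n \<ge> 2" "sf_dfa n \<Sigma> d F" "S \<subseteq> {..<n}" "q < n" "semiconst S q \<in> trans_sg n \<Sigma> d"
  shows "0 \<in> S \<and> q = n - 1"
proof -
  obtain w where w: "w \<in> lists \<Sigma>" "w \<noteq> []" "semiconst S q = word_tr n d w"
    using assms(5) by (auto simp: trans_sg_def)
  have ev: "\<And>p. p < n \<Longrightarrow> delta_hat d p w = semiconst S q p"
    using w(3) by (simp add: fun_eq_iff word_tr_def)
  have n0: "0 < n" using assms(1) by simp
  have S0: "0 \<in> S"
  proof (rule ccontr)
    assume "0 \<notin> S"
    then have "delta_hat d 0 w = 0" using ev[OF n0] by (simp add: semiconst_def)
    then show False using not_to_zero[OF assms(1,2) n0 w(1,2)] by simp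
  qed
  have d0: "delta_hat d 0 w = q" using ev[OF n0] S0 by (simp add: semiconst_def)
  have q0: "q \<noteq> 0" using not_to_zero[OF assms(1,2) n0 w(1,2)] d0 by simp
  have dq: "delta_hat d q w = q" using ev[OF assms(4)] by (simp add: semiconst_def)
  have "delta_hat d q w = n - 1" using collide[OF assms(1,2,4) q0 w(1,2)] d0 dq by simp
  then show ?thesis using S0 dq by simp
qed

lemma dh_enc: "set w' \<subseteq> {0..<k} \<Longrightarrow>
   delta_hat (\<lambda>c p. if c < k then d (g c) p else e p) p w' = delta_hat d p (map g w')"
  by (induction w' arbitrary: p) auto

lemma encode:
  assumes "g ` {0..<k} = \<Sigma>"
  shows "w \<in> lists \<Sigma> \<Longrightarrow> \<exists>w'. set w' \<subseteq> {0..<k} \<and> map g w' = w"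
proof (induction w)
  case Nil then show ?case by auto
next
  case (Cons a w)
  then obtain w' where "set w' \<subseteq> {0..<k}" "map g w' = w" by auto
  moreover have "a \<in> g ` {0..<k}" using assms Cons.prems by simp
  then obtain c where "c \<in> {0..<k}" "g c = a" by blast
  ultimately show ?case by (intro exI[of _ "c # w'"]) auto
qed

lemma part2:
  assumes n2: "n \<ge> 2" and sf: "sf_dfa n \<Sigma> d F" and S: "S \<subseteq> {..<n}" "0 \<in> S"
    and mx: "maximal_sg n (trans_sg n \<Sigma> d)"
  shows "semiconst S (n - 1) \<in> trans_sg n \<Sigma> d"
proof -
  have cd: "complete_dfa n \<Sigma> d F" using sf by (simp add: sf_dfa_def)
  have fin: "finite \<Sigma>" using cd by (simp add: complete_dfa_def)
  define k where "k = card \<Sigma>"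
  obtain g where g: "bij_betw g {0..<k} \<Sigma>" using ex_bij_betw_nat_finite[OF fin] k_def by blast
  have gim: "g ` {0..<k} = \<Sigma>" using g by (simp add: bij_betw_def)
  define e where "e = semiconst S (n - 1)"
  define d' where "d' = (\<lambda>c p. if c < k then d (g c) p else e p)"
  define \<Sigma>' where "\<Sigma>' = {0..k}"
  have n1F: "n - 1 \<notin> F"
    using sf unfolding sf_dfa_def empty_state_def by (metis delta_hat.simps(1) lists.Nil)
  have n1lt: "n - 1 < n" using n2 by simp
  have e_n1: "e (n - 1) = n - 1" by (simp add: e_def semiconst_def)
  have e0: "e 0 = n - 1" using S by (simp add: e_def semiconst_def)
  have d_n1: "d a (n - 1) = n - 1" if "a \<in> \<Sigma>" for a
  proof (rule ccontr)
    assume ne: "d a (n - 1) \<noteq> n - 1"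
    have lt: "d a (n - 1) < n" using cd that n1lt by (simp add: complete_dfa_def)
    obtain v where v: "v \<in> lists \<Sigma>" "delta_hat d (d a (n-1)) v \<in> F"
      using nonempty_state[OF sf lt ne] by blast
    have "delta_hat d (n - 1) (a # v) \<in> F" using v by simp
    moreover have "a # v \<in> lists \<Sigma>" using v that by simp
    moreover have "\<forall>w\<in>lists \<Sigma>. delta_hat d (n-1) w \<notin> F"
      using sf by (simp add: sf_dfa_def empty_state_def)
    ultimately show False by blast
  qed
  have sink: "delta_hat d' (n - 1) y = n - 1" if "y \<in> lists \<Sigma>'" for y
    using that
  proof (induction y)
    case Nil then show ?case by simp
  next
    case (Cons c y)
    have "d' c (n - 1) = n - 1"
      using d_n1 e_n1 g by (auto simp: d'_def bij_betw_def)
    then show ?case using Cons by simp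
  qed
  have erase: "y \<in> lists \<Sigma>' \<Longrightarrow> delta_hat d' p y \<noteq> n - 1 \<Longrightarrow>
      delta_hat d' p y = delta_hat d p (map g (filter (\<lambda>c. c < k) y))"
    for y p
  proof (induction y arbitrary: p)
    case Nil then show ?case by simp
  next
    case (Cons c y)
    show ?case
    proof (cases "c < k")
      case True then show ?thesis using Cons by (simp add: d'_def)
    next
      case False
      show ?thesis
      proof (cases "p \<in> S")
        case True
        then have "d' c p = n - 1" using False by (simp add: d'_def e_def semiconst_def)
        moreover have "y \<in> lists \<Sigma>'" using Cons.prems by simp
        ultimately have "delta_hat d' p (c # y) = n - 1" using sink by simp
        then show ?thesis using Cons.prems by simp
      next
        case pS: False
        then have "d' c p = p" using False by (simp add: d'_def e_def semiconst_def)
        then show ?thesis using Cons False by simp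
      qed
    qed
  qed
  have encw: "\<exists>w'. w' \<in> lists \<Sigma>' \<and> (\<forall>p. delta_hat d' p w' = delta_hat d p w) \<and> (w' = [] \<longleftrightarrow> w = [])"
    if wL: "w \<in> lists \<Sigma>" for w
  proof -
    obtain w' where w': "set w' \<subseteq> {0..<k}" "map g w' = w" using encode[OF gim wL] by blast
    have "\<forall>p. delta_hat d' p w' = delta_hat d p w" using dh_enc[OF w'(1), of d g e] w'(2) unfolding d'_def by simp
    moreover have "w' \<in> lists \<Sigma>'" using w'(1) by (auto simp: \<Sigma>'_def)
    ultimately show ?thesis using w'(2) by auto
  qed
  have gS: "map g (filter (\<lambda>c. c < k) y) \<in> lists \<Sigma>" for y
    using gim by auto
  have cd': "complete_dfa n \<Sigma>' d' F"
    unfolding complete_dfa_def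
  proof (intro conjI ballI allI impI)
    show "finite \<Sigma>'" by (simp add: \<Sigma>'_def)
    show "0 < n" using n2 by simp
    show "F \<subseteq> {..<n}" using cd by (simp add: complete_dfa_def)
  next
    fix c q assume c: "c \<in> \<Sigma>'" and q: "q < n"
    show "d' c q < n"
    proof (cases "c < k")
      case True
      then have "g c \<in> \<Sigma>" using gim by auto
      then show ?thesis using True cd q by (simp add: d'_def complete_dfa_def)
    next
      case False then show ?thesis using q n1lt by (simp add: d'_def e_def semiconst_def)
    qed
  qed
  have min': "minimal_dfa n \<Sigma>' d' F"
    unfolding minimal_dfa_def
  proof (intro conjI allI impI)
    fix q assume q: "q < n"
    obtain u where u: "u \<in> lists \<Sigma>" "delta_hat d 0 u = q" using reach[OF sf q] by blast
    obtain u' where u': "u' \<in> lists \<Sigma>'" "\<forall>p. delta_hat d' p u' = delta_hat d p u" using encw[OF u(1)] by blast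
    have "delta_hat d' 0 u' = q" using u'(2) u(2) by simp
    then show "\<exists>w\<in>lists \<Sigma>'. delta_hat d' 0 w = q" using u'(1) by blast
  next
    fix p q assume pq: "p < n" "q < n" "p \<noteq> q"
    obtain u where u: "u \<in> lists \<Sigma>" "(delta_hat d p u \<in> F) \<noteq> (delta_hat d q u \<in> F)"
      using sf pq unfolding sf_dfa_def minimal_dfa_def by blast
    obtain u' where u': "u' \<in> lists \<Sigma>'" "\<forall>p. delta_hat d' p u' = delta_hat d p u" using encw[OF u(1)] by blast
    have "(delta_hat d' p u' \<in> F) \<noteq> (delta_hat d' q u' \<in> F)" using u'(2) u(2) by simp
    then show "\<exists>w\<in>lists \<Sigma>'. (delta_hat d' p w \<in> F) \<noteq> (delta_hat d' q w \<in> F)" using u'(1) by blast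
  qed
  have emp': "empty_state n \<Sigma>' d' F (n - 1)"
    using sink n1F n1lt by (simp add: empty_state_def)
  have sfree: "suffix_free (dfa_lang \<Sigma>' d' F)"
    unfolding suffix_free_def
  proof (intro ballI impI)
    fix w u assume w: "w \<in> dfa_lang \<Sigma>' d' F" and u: "u \<in> dfa_lang \<Sigma>' d' F" and su: "suffix u w"
    obtain x where x: "w = x @ u" using su by (auto simp: suffix_def)
    show "u = w"
    proof (cases x)
      case Nil then show ?thesis using x by simp
    next
      case (Cons c x')
      have wl: "w \<in> lists \<Sigma>'" "delta_hat d' 0 w \<in> F" using w by (auto simp: dfa_lang_def)
      have ul: "u \<in> lists \<Sigma>'" "delta_hat d' 0 u \<in> F" using u by (auto simp: dfa_lang_def)
      have c: "c \<in> \<Sigma>'" using wl(1) x Cons by simp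
      show ?thesis
      proof (cases "c < k")
        case False
        then have "d' c 0 = n - 1" using e0 by (simp add: d'_def)
        moreover have "x' @ u \<in> lists \<Sigma>'" using wl(1) x Cons by simp
        moreover have "delta_hat d' 0 w = delta_hat d' (d' c 0) (x' @ u)" using x Cons by simp
        ultimately have "delta_hat d' 0 w = n - 1" using sink by simp
        then show ?thesis using wl n1F by simp
      next
        case True
        have ew: "delta_hat d' 0 w = delta_hat d 0 (map g (filter (\<lambda>c. c < k) w))"
        proof -
          have "delta_hat d' 0 w \<noteq> n - 1" using wl(2) n1F by auto
          then show ?thesis using erase[OF wl(1)] by blast
        qed
        have eu: "delta_hat d' 0 u = delta_hat d 0 (map g (filter (\<lambda>c. c < k) u))"
        proof -
          have "delta_hat d' 0 u \<noteq> n - 1" using ul(2) n1F by auto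
          then show ?thesis using erase[OF ul(1)] by blast
        qed
        define U where "U = map g (filter (\<lambda>c. c < k) u)"
        define X where "X = map g (filter (\<lambda>c. c < k) x)"
        have WX: "map g (filter (\<lambda>c. c < k) w) = X @ U" using x by (simp add: X_def U_def)
        have Xne: "X \<noteq> []" using True Cons by (simp add: X_def)
        have "X @ U \<in> dfa_lang \<Sigma> d F" "U \<in> dfa_lang \<Sigma> d F"
          using ew eu wl(2) ul(2) WX gS[of w] gS[of u] unfolding dfa_lang_def U_def by auto
        moreover have "suffix U (X @ U)" by (simp add: suffix_def)
        ultimately have "U = X @ U" using sf unfolding sf_dfa_def suffix_free_def by blast
        then show ?thesis using Xne by simp
      qed
    qed
  qed
  have sf': "sf_dfa n \<Sigma>' d' F" using cd' min' emp' sfree by (simp add: sf_dfa_def)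
  have sub: "trans_sg n \<Sigma> d \<subseteq> trans_sg n \<Sigma>' d'"
  proof
    fix t assume "t \<in> trans_sg n \<Sigma> d"
    then obtain w where w: "w \<in> lists \<Sigma>" "w \<noteq> []" "t = word_tr n d w" by (auto simp: trans_sg_def)
    obtain w' where "w' \<in> lists \<Sigma>'" "\<forall>p. delta_hat d' p w' = delta_hat d p w" "w' \<noteq> []"
      using encw[OF w(1)] w(2) by blast
    then have "t = word_tr n d' w'" using w(3) by (simp add: word_tr_def fun_eq_iff)
    then show "t \<in> trans_sg n \<Sigma>' d'" using \<open>w' \<in> lists \<Sigma>'\<close> \<open>w' \<noteq> []\<close> by (auto simp: trans_sg_def)
  qed
  have "semiconst S (n - 1) = word_tr n d' [k]"
    using S(1) by (auto simp: fun_eq_iff word_tr_def d'_def e_def semiconst_def)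
  then have inT': "semiconst S (n - 1) \<in> trans_sg n \<Sigma>' d'"
    by (auto simp: trans_sg_def \<Sigma>'_def)
  have "\<not> (trans_sg n \<Sigma> d \<subset> trans_sg n \<Sigma>' d')" using mx sf' unfolding maximal_sg_def by blast
  then have "trans_sg n \<Sigma>' d' = trans_sg n \<Sigma> d" using sub by blast
  then show ?thesis using inT' by simp
qed

theorem lemma5:
  fixes n :: nat and \<Sigma> :: "'a set" and \<delta> :: "'a \<Rightarrow> nat \<Rightarrow> nat" and F :: "nat set"
  assumes "n \<ge> 2"
    and "sf_dfa n \<Sigma> \<delta> F"
  shows "(\<forall>S q. S \<noteq> {} \<and> S \<subseteq> {..<n} \<and> q < n \<and> semiconst S q \<in> trans_sg n \<Sigma> \<delta>
              \<longrightarrow> 0 \<in> S \<and> q = n - 1)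
       \<and> (maximal_sg n (trans_sg n \<Sigma> \<delta>) \<longrightarrow>
            (\<forall>S. S \<noteq> {} \<and> S \<subseteq> {..<n} \<and> 0 \<in> S \<longrightarrow> semiconst S (n - 1) \<in> trans_sg n \<Sigma> \<delta>))"
  using part1[OF assms] part2[OF assms] by blast

end
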